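(* For every integer $n\ge 0$, \[ (-1)^n d_{n,q}=\frac{1}{n!}\sum_{m=0}^{n}2^{2n-m}B_{m,q}S_1(n,m). \]
   Context: Let $p$ be a fixed odd prime, $\mathbb{C}_p$ the completion of the algebraic closure of $\mathbb{Q}_p$, with $|p|_p=1/p$. Let $q\in\mathbb{C}_p$ with $|1-q|_p<p^{-1/(p-1)}$, and $\log$ denotes the $p$-adic logarithm. The $q$-Bernoulli numbers $B_{n,q}$ are defined by \[ \frac{(q-1)+\frac{q-1}{\log q}t}{qe^t-1}=\sum_{n=0}^\infty B_{n,q}\frac{t^n}{n!}. \] The numbers $d_{n,q}$ ($q$-analogues of the Catalan–Daehee numbers) are defined by \[ \frac{q-1+\frac{q-1}{\log q}\cdot\frac12\log(1-4t)}{q\sqrt{1-4t}-1}=\sum_{n=0}^{\infty}d_{n,q}t^n, \] for $t\in\mathbb{C}_p$ with $|t|_p<p^{-1/(p-1)}$. $S_1(n,m)$ are the Stirling numbers of the first kind, defined by $(x)_n=\sum_{l=0}^n S_1(n,l)x^l$, where $(x)_0=1$ and $(x)_n=x(x-1)\cdots(x-n+1)$ for $n\ge1$. *)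

theory Defs
  imports "HOL-Computational_Algebra.Computational_Algebra"
begin

text \<open>Generating function of the q-Bernoulli numbers, as a formal power series in t.
  The parameter lq plays the role of log q.\<close>
definition qBern_gf :: "'a::field_char_0 \<Rightarrow> 'a \<Rightarrow> 'a fps" where
  "qBern_gf q lq =
     (fps_const (q - 1) + fps_const ((q - 1) / lq) * fps_X) / (fps_const q * fps_exp 1 - 1)"

definition qBern :: "'a::field_char_0 \<Rightarrow> 'a \<Rightarrow> nat \<Rightarrow> 'a" where
  "qBern q lq n = fact n * fps_nth (qBern_gf q lq) n"

definition sqrt_1m4t :: "'a::field_char_0 fps" where
  "sqrt_1m4t = Abs_fps (\<lambda>n. ((1/2) gchoose n) * (-4) ^ n)"

definition log_1m4t :: "'a::field_char_0 fps" where
  "log_1m4t = Abs_fps (\<lambda>n. if n = 0 then 0 else - (4 ^ n / of_nat n))"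

definition qCD_gf :: "'a::field_char_0 \<Rightarrow> 'a \<Rightarrow> 'a fps" where
  "qCD_gf q lq =
     (fps_const (q - 1) + fps_const ((q - 1) / lq) * fps_const (1/2) * log_1m4t)
       / (fps_const q * sqrt_1m4t - 1)"

definition qCD :: "'a::field_char_0 \<Rightarrow> 'a \<Rightarrow> nat \<Rightarrow> 'a" where
  "qCD q lq n = fps_nth (qCD_gf q lq) n"

definition stirling1 :: "nat \<Rightarrow> nat \<Rightarrow> int" where
  "stirling1 n l = coeff (\<Prod>i<n. [:- int i, 1:]) l"

end

theory Submission
  imports Defs
begin

lemma stirling1_0: "stirling1 0 m = (if m = 0 then 1 else 0)"
  by (simp add: stirling1_def one_pCons coeff_pCons split: nat.split)

lemma stirling1_Suc_0: "stirling1 (Suc n) 0 = 0"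
proof -
  have "stirling1 (Suc n) 0 = poly (\<Prod>i<Suc n. [:- int i, 1:]) 0"
    by (simp add: stirling1_def poly_0_coeff_0)
  also have "\<dots> = 0" by (auto simp add: poly_prod)
  finally show ?thesis .
qed

lemma stirling1_Suc_Suc: "stirling1 (Suc n) (Suc m) = stirling1 n m - int n * stirling1 n (Suc m)"
proof -
  have "(\<Prod>i<Suc n. [:- int i, 1:]) = (\<Prod>i<n. [:- int i, 1:]) * pCons (- int n) [:1:]"
    by simp
  also have "\<dots> = smult (- int n) (\<Prod>i<n. [:- int i, 1:]) + pCons 0 (\<Prod>i<n. [:- int i, 1:])"
    by (simp add: mult_pCons_right)
  finally show ?thesis by (simp add: stirling1_def)
qed

lemma log_deriv: "(1 - 4 * fps_X) * fps_deriv (log_1m4t :: 'a::field_char_0 fps) = - 4"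
proof (rule fps_ext)
  fix n
  show "((1 - 4 * fps_X) * fps_deriv (log_1m4t :: 'a fps)) $ n = (- 4 :: 'a fps) $ n"
    by (cases n) (simp_all add: algebra_simps log_1m4t_def numeral_fps_const del: of_nat_Suc)
qed

lemma logpow_rec:
  "of_nat (Suc n) * ((log_1m4t :: 'a::field_char_0 fps) ^ Suc k) $ Suc n =
     4 * of_nat n * (log_1m4t ^ Suc k) $ n - 4 * of_nat (Suc k) * (log_1m4t ^ k) $ n"
proof -
  let ?D = "log_1m4t :: 'a fps"
  have "(1 - 4 * fps_X) * fps_deriv (?D ^ Suc k) = fps_const (of_nat (Suc k)) * ((1 - 4 * fps_X) * fps_deriv ?D) * ?D ^ k"
    by (simp only: fps_deriv_power) (simp add: algebra_simps)
  also have "\<dots> = - 4 * fps_const (of_nat (Suc k)) * ?D ^ k" by (simp add: log_deriv)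
  finally have h1: "((1 - 4 * fps_X) * fps_deriv (?D ^ Suc k)) $ n = (- 4 * fps_const (of_nat (Suc k)) * ?D ^ k) $ n"
    by simp
  have h2: "((1 - 4 * fps_X) * fps_deriv G) $ n = of_nat (Suc n) * G $ Suc n - 4 * of_nat n * G $ n" for G :: "'a fps"
    by (cases n) (simp_all add: algebra_simps numeral_fps_const del: of_nat_Suc)
  have h3: "(- 4 * fps_const c * H) $ n = - 4 * c * H $ n" for c and H :: "'a fps"
    by (simp add: numeral_fps_const)
  from h1 have "of_nat (Suc n) * (?D ^ Suc k) $ Suc n - 4 * of_nat n * (?D ^ Suc k) $ n = - 4 * of_nat (Suc k) * (?D ^ k) $ n"
    by (simp only: h2 h3)
  then show ?thesis by (simp add: algebra_simps)
qed

lemma logpow_nth: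
  "fact n * ((log_1m4t :: 'a::field_char_0 fps) ^ m) $ n = fact m * (-4) ^ n * of_int (stirling1 n m)"
proof (induction n arbitrary: m)
  case 0
  have "log_1m4t $ 0 = (0::'a)" by (simp add: log_1m4t_def)
  then show ?case by (simp add: stirling1_0 fps_nth_power_0)
next
  case (Suc n)
  show ?case
  proof (cases m)
    case 0
    then show ?thesis by (simp add: stirling1_Suc_0)
  next
    case (Suc k)
    have "fact (Suc n) * ((log_1m4t :: 'a fps) ^ Suc k) $ Suc n
       = fact n * (of_nat (Suc n) * ((log_1m4t :: 'a fps) ^ Suc k) $ Suc n)"
      by (simp add: algebra_simps)
    also have "\<dots> = 4 * of_nat n * (fact n * (log_1m4t ^ Suc k) $ n) - 4 * of_nat (Suc k) * (fact n * (log_1m4t ^ k) $ n)"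
      by (simp only: logpow_rec) (simp add: algebra_simps)
    also have "\<dots> = 4 * of_nat n * (fact (Suc k) * (-4) ^ n * of_int (stirling1 n (Suc k))) - 4 * of_nat (Suc k) * (fact k * (-4) ^ n * of_int (stirling1 n k))"
      by (simp only: Suc.IH)
    also have "\<dots> = fact (Suc k) * (-4) ^ Suc n * of_int (stirling1 (Suc n) (Suc k))"
      by (simp add: stirling1_Suc_Suc algebra_simps)
    finally show ?thesis using Suc by simp
  qed
qed

lemma sqrt_deriv: "(1 - 4 * fps_X) * fps_deriv (sqrt_1m4t :: 'a::field_char_0 fps) = - 2 * sqrt_1m4t"
proof (rule fps_ext)
  fix n
  have g: "of_nat (Suc n) * (a gchoose Suc n) = (a - of_nat n) * (a gchoose n)" for a :: 'a
  proof -
    have "fact n * (of_nat (Suc n) * (a gchoose Suc n)) = fact (Suc n) * (a gchoose Suc n)"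
      by (simp add: algebra_simps)
    also have "\<dots> = fact n * ((a - of_nat n) * (a gchoose n))"
      by (simp only: gbinomial_mult_fact prod.atLeastLessThan_Suc) (simp add: gbinomial_mult_fact[symmetric] algebra_simps)
    finally show ?thesis by simp
  qed
  have h2: "((1 - 4 * fps_X) * fps_deriv G) $ n = of_nat (Suc n) * G $ Suc n - 4 * of_nat n * G $ n" for G :: "'a fps"
    by (cases n) (simp_all add: algebra_simps numeral_fps_const del: of_nat_Suc)
  have h3: "(- 2 * H) $ n = - 2 * H $ n" for H :: "'a fps"
    by (simp add: numeral_fps_const)
  have "of_nat (Suc n) * ((1/2) gchoose Suc n) * (-4) ^ Suc n - 4 * of_nat n * (((1/2) gchoose n) * (-4) ^ n)
      = - 2 * (((1/2) gchoose n) * (-4) ^ n :: 'a)"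
    by (simp only: g) (simp add: algebra_simps)
  then show "((1 - 4 * fps_X) * fps_deriv (sqrt_1m4t :: 'a fps)) $ n = (- 2 * sqrt_1m4t) $ n"
    by (simp only: h2 h3) (simp add: sqrt_1m4t_def algebra_simps)
qed

definition TT :: "'a::field_char_0 fps" where "TT = fps_const (1/2) * log_1m4t"

lemma TT0: "TT $ 0 = 0" by (simp add: TT_def log_1m4t_def)

lemma sqrt_exp: "sqrt_1m4t = (fps_exp 1 oo (TT :: 'a::field_char_0 fps))"
proof -
  define S :: "'a fps" where "S = sqrt_1m4t"
  define W :: "'a fps" where "W = fps_exp 1 oo TT"
  have W0: "W $ 0 = 1" by (simp add: W_def)
  have S0: "S $ 0 = 1" by (simp add: S_def sqrt_1m4t_def)
  have dW: "fps_deriv W = W * fps_deriv TT"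
    by (simp add: W_def fps_compose_deriv[OF TT0])
  have "(1 - 4 * fps_X) * (fps_deriv S - S * fps_deriv TT) = 0"
  proof -
    have "(1 - 4 * fps_X) * (S * fps_deriv TT) = S * fps_const (1/2) * ((1 - 4 * fps_X) * fps_deriv log_1m4t)"
      by (simp add: TT_def algebra_simps)
    also have "\<dots> = - 2 * S" by (simp only: log_deriv) (simp add: fps_eq_iff numeral_fps_const)
    finally show ?thesis using sqrt_deriv[where 'a='a] by (simp add: S_def right_diff_distrib)
  qed
  moreover have "(1 - 4 * fps_X :: 'a fps) \<noteq> 0"
  proof
    assume "(1 - 4 * fps_X :: 'a fps) = 0"
    then have "(1 - 4 * fps_X :: 'a fps) $ 0 = 0" by simp
    then show False by simp
  qed
  ultimately have dS: "fps_deriv S = S * fps_deriv TT" by simp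
  have WI: "W * inverse W = 1" using W0 by (simp add: inverse_mult_eq_1')
  have "fps_deriv (S * inverse W) = inverse W * (fps_deriv S - S * fps_deriv TT * (W * inverse W))"
    using W0 by (simp add: fps_inverse_deriv dW power2_eq_square algebra_simps)
  also have "\<dots> = 0" by (simp add: WI dS)
  finally have "S * inverse W = fps_const ((S * inverse W) $ 0)" by (simp only: fps_deriv_eq_0_iff)
  also have "\<dots> = 1" using S0 W0 by simp
  finally have "S * inverse W * W = W" by simp
  then have "S = W" using W0 by (simp add: mult.assoc inverse_mult_eq_1)
  then show ?thesis by (simp add: S_def W_def)
qed

lemma qCD_compose:
  fixes q lq :: "'a::field_char_0"
  assumes "q \<noteq> 1"
  shows "qCD_gf q lq = qBern_gf q lq oo TT"
proof -
  define N1 :: "'a fps" where "N1 = fps_const (q - 1) + fps_const ((q - 1) / lq) * fps_X"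
  define d1 :: "'a fps" where "d1 = fps_const q * fps_exp 1 - 1"
  define N2 :: "'a fps" where "N2 = fps_const (q - 1) + fps_const ((q - 1) / lq) * fps_const (1/2) * log_1m4t"
  define d2 :: "'a fps" where "d2 = fps_const q * sqrt_1m4t - 1"
  have d10: "d1 $ 0 \<noteq> 0" using assms by (simp add: d1_def)
  have d20: "d2 $ 0 \<noteq> 0" using assms by (simp add: d2_def sqrt_1m4t_def)
  have B: "qBern_gf q lq = N1 * inverse d1"
    unfolding qBern_gf_def N1_def[symmetric] d1_def[symmetric] using d10 by (simp add: fps_divide_unit)
  have C: "qCD_gf q lq = N2 * inverse d2"
    unfolding qCD_gf_def N2_def[symmetric] d2_def[symmetric] using d20 by (simp add: fps_divide_unit)
  have N12: "N1 oo TT = N2"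
  proof -
    have "fps_const ((q - 1) / lq) * fps_X oo TT = fps_const ((q - 1) / lq) * TT"
      by (simp add: fps_compose_mult_distrib[OF TT0] TT0)
    then show ?thesis
      by (simp add: N1_def N2_def fps_compose_add_distrib TT_def mult.assoc)
  qed
  have "qBern_gf q lq * d1 = N1" using d10 by (simp add: B mult.assoc inverse_mult_eq_1)
  then have "(qBern_gf q lq oo TT) * (d1 oo TT) = N1 oo TT"
    by (simp add: fps_compose_mult_distrib[OF TT0, symmetric])
  moreover have "d1 oo TT = d2"
    by (simp add: d1_def d2_def fps_compose_sub_distrib fps_compose_mult_distrib[OF TT0] sqrt_exp)
  ultimately have "(qBern_gf q lq oo TT) * d2 = N2" by (simp add: N12)
  then have "N2 * inverse d2 = (qBern_gf q lq oo TT) * (d2 * inverse d2)" by (simp add: mult.assoc)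
  also have "\<dots> = qBern_gf q lq oo TT" using d20 by (simp add: inverse_mult_eq_1')
  finally show ?thesis by (simp add: C)
qed

theorem theorem2:
  fixes q lq :: "'a::field_char_0" and n :: nat
  assumes "q \<noteq> 1" and "lq \<noteq> 0"
  shows "(-1) ^ n * qCD q lq n =
    1 / fact n * (\<Sum>m = 0..n. 2 ^ (2 * n - m) * qBern q lq m * of_int (stirling1 n m))"
proof -
  have tm: "(-1) ^ n * (qBern_gf q lq $ i * ((TT :: 'a fps) ^ i $ n)) =
      1 / fact n * (2 ^ (2 * n - i) * qBern q lq i * of_int (stirling1 n i))" if "i \<le> n" for i
  proof -
    have "(TT :: 'a fps) ^ i = fps_const ((1/2) ^ i) * (log_1m4t :: 'a fps) ^ i"
      by (simp add: TT_def power_mult_distrib)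
    then have "(TT :: 'a fps) ^ i $ n = (1/2) ^ i * ((log_1m4t :: 'a fps) ^ i $ n)" by simp
    also have "(log_1m4t :: 'a fps) ^ i $ n = fact i * (-4) ^ n * of_int (stirling1 n i) / fact n"
      using logpow_nth[of n i, where 'a='a] by (simp add: field_simps)
    finally have 1: "(TT :: 'a fps) ^ i $ n = (1/2) ^ i * (fact i * (-4) ^ n * of_int (stirling1 n i) / fact n)" .
    have 2: "qBern_gf q lq $ i = qBern q lq i / fact i" by (simp add: qBern_def)
    have 3: "(2::'a) ^ (2 * n - i) = 4 ^ n / 2 ^ i"
    proof -
      have "(2::'a) ^ (2 * n - i) * 2 ^ i = 2 ^ (2 * n)" using that by (simp add: power_add[symmetric])
      also have "\<dots> = 4 ^ n" by (simp add: power_mult)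
      finally show ?thesis by (simp add: field_simps)
    qed
    have 4: "(-1) ^ n * (-4) ^ n = (4 ^ n :: 'a)"
      by (simp add: power_mult_distrib[symmetric])
    show ?thesis unfolding 1 2 3
      by (simp add: field_simps 4 power_one_over)
  qed
  have "(-1) ^ n * qCD q lq n = (\<Sum>i = 0..n. (-1) ^ n * (qBern_gf q lq $ i * (TT ^ i $ n)))"
    by (simp add: qCD_def qCD_compose[OF assms(1)] fps_compose_nth sum_distrib_left)
  also have "\<dots> = (\<Sum>i = 0..n. 1 / fact n * (2 ^ (2 * n - i) * qBern q lq i * of_int (stirling1 n i)))"
    by (rule sum.cong) (auto simp: tm)
  also have "\<dots> = 1 / fact n * (\<Sum>m = 0..n. 2 ^ (2 * n - m) * qBern q lq m * of_int (stirling1 n m))"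
    by (simp add: sum_distrib_left)
  finally show ?thesis .
qed

end
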